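(* Let $k\ge1$, let $(A,t)$ be a $\mathcal{C}_k$-algebra and $F\subseteq A$. Then $F$ is a cyclic deductive system of $A$ if and only if $F$ is a $c$-filter of $A$.
   Context: A modal pseudocomplemented De Morgan algebra ($mpM$-algebra) is an algebra $\langle A,\wedge,\vee,\sim,{}^\ast,0,1\rangle$ such that $\langle A,\wedge,\vee,\sim,0,1\rangle$ is a De Morgan algebra (bounded distributive lattice with $\sim\sim x=x$, $\sim(x\vee y)=\sim x\wedge\sim y$), $x^\ast$ is the pseudocomplement of $x$, and $x\vee\sim x\le x\vee x^\ast$. Put $\nabla x=\sim(\sim x\wedge x^\ast)$, $\triangle x=\sim\nabla\sim x$. A $\mathcal{C}_k$-algebra ($k\ge1$) is a pair $(A,t)$ with $A$ an $mpM$-algebra and $t$ an $mpM$-automorphism of $A$ with $t^k=\mathrm{id}$. The cyclic implication is $a\rightharpoondown b=\bigvee_{i=1}^{k}\nabla(\sim t^i(a))\vee b$. A cyclic deductive system is a set $D\subseteq A$ with $1\in D$ such that $x\in D$ and $x\rightharpoondown y\in D$ imply $y\in D$. A $c$-filter is a lattice filter $F$ of $A$ such that $x\in F$ implies $\triangle x\in F$ and $t(x)\in F$. *)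

theory Defs
  imports Main
begin

text \<open>The underlying bounded distributive lattice is the type class structure of 'a
  (inf, sup, bot = 0, top = 1). The De Morgan negation and the pseudocomplement are
  explicit operations.\<close>

definition de_morgan :: "('a::{distrib_lattice,bounded_lattice} \<Rightarrow> 'a) \<Rightarrow> bool" where
  "de_morgan neg \<longleftrightarrow> (\<forall>x. neg (neg x) = x) \<and> (\<forall>x y. neg (sup x y) = inf (neg x) (neg y))"

definition is_pseudocomplement :: "('a::{distrib_lattice,bounded_lattice} \<Rightarrow> 'a) \<Rightarrow> bool" where
  "is_pseudocomplement star \<longleftrightarrow> (\<forall>x y. inf x y = bot \<longleftrightarrow> y \<le> star x)"

definition mpM_algebra :: "('a::{distrib_lattice,bounded_lattice} \<Rightarrow> 'a) \<Rightarrow> ('a \<Rightarrow> 'a) \<Rightarrow> bool" where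
  "mpM_algebra neg star \<longleftrightarrow> de_morgan neg \<and> is_pseudocomplement star \<and>
     (\<forall>x. sup x (neg x) \<le> sup x (star x))"

definition mpM_automorphism ::
  "('a::{distrib_lattice,bounded_lattice} \<Rightarrow> 'a) \<Rightarrow> ('a \<Rightarrow> 'a) \<Rightarrow> ('a \<Rightarrow> 'a) \<Rightarrow> bool" where
  "mpM_automorphism neg star t \<longleftrightarrow> bij t \<and>
     (\<forall>x y. t (inf x y) = inf (t x) (t y)) \<and> (\<forall>x y. t (sup x y) = sup (t x) (t y)) \<and>
     (\<forall>x. t (neg x) = neg (t x)) \<and> (\<forall>x. t (star x) = star (t x)) \<and>
     t bot = bot \<and> t top = top"

definition Ck_algebra ::
  "nat \<Rightarrow> ('a::{distrib_lattice,bounded_lattice} \<Rightarrow> 'a) \<Rightarrow> ('a \<Rightarrow> 'a) \<Rightarrow> ('a \<Rightarrow> 'a) \<Rightarrow> bool" where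
  "Ck_algebra k neg star t \<longleftrightarrow> mpM_algebra neg star \<and> mpM_automorphism neg star t \<and> t ^^ k = id"

definition nabla :: "('a::{distrib_lattice,bounded_lattice} \<Rightarrow> 'a) \<Rightarrow> ('a \<Rightarrow> 'a) \<Rightarrow> 'a \<Rightarrow> 'a" where
  "nabla neg star x = neg (inf (neg x) (star x))"

definition tri :: "('a::{distrib_lattice,bounded_lattice} \<Rightarrow> 'a) \<Rightarrow> ('a \<Rightarrow> 'a) \<Rightarrow> 'a \<Rightarrow> 'a" where
  "tri neg star x = neg (nabla neg star (neg x))"

definition cimp ::
  "nat \<Rightarrow> ('a::{distrib_lattice,bounded_lattice} \<Rightarrow> 'a) \<Rightarrow> ('a \<Rightarrow> 'a) \<Rightarrow> ('a \<Rightarrow> 'a) \<Rightarrow> 'a \<Rightarrow> 'a \<Rightarrow> 'a" where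
  "cimp k neg star t a b =
     sup (Sup_fin ((\<lambda>i. nabla neg star (neg ((t ^^ i) a))) ` {1..k})) b"

definition cyclic_ds ::
  "nat \<Rightarrow> ('a::{distrib_lattice,bounded_lattice} \<Rightarrow> 'a) \<Rightarrow> ('a \<Rightarrow> 'a) \<Rightarrow> ('a \<Rightarrow> 'a) \<Rightarrow> 'a set \<Rightarrow> bool" where
  "cyclic_ds k neg star t D \<longleftrightarrow> top \<in> D \<and>
     (\<forall>x y. x \<in> D \<longrightarrow> cimp k neg star t x y \<in> D \<longrightarrow> y \<in> D)"

definition lattice_filter :: "'a::{distrib_lattice,bounded_lattice} set \<Rightarrow> bool" where
  "lattice_filter F \<longleftrightarrow> F \<noteq> {} \<and> (\<forall>x y. x \<in> F \<longrightarrow> x \<le> y \<longrightarrow> y \<in> F) \<and>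
     (\<forall>x y. x \<in> F \<longrightarrow> y \<in> F \<longrightarrow> inf x y \<in> F)"

definition c_filter ::
  "('a::{distrib_lattice,bounded_lattice} \<Rightarrow> 'a) \<Rightarrow> ('a \<Rightarrow> 'a) \<Rightarrow> ('a \<Rightarrow> 'a) \<Rightarrow> 'a set \<Rightarrow> bool" where
  "c_filter neg star t F \<longleftrightarrow> lattice_filter F \<and>
     (\<forall>x. x \<in> F \<longrightarrow> tri neg star x \<in> F) \<and> (\<forall>x. x \<in> F \<longrightarrow> t x \<in> F)"

end

theory Submission
  imports Defs
begin

lemma dm_nn: "de_morgan neg \<Longrightarrow> neg (neg x) = x"
  by (simp add: de_morgan_def)
lemma dm_sup: "de_morgan neg \<Longrightarrow> neg (sup x y) = inf (neg x) (neg y)"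
  by (simp add: de_morgan_def)
lemma dm_inf: "de_morgan neg \<Longrightarrow> neg (inf x y) = sup (neg x) (neg y)"
proof -
  assume d: "de_morgan neg"
  have "neg (sup (neg x) (neg y)) = inf x y" using d by (simp add: dm_sup dm_nn)
  hence "neg (neg (sup (neg x) (neg y))) = neg (inf x y)" by simp
  thus ?thesis using d by (simp add: dm_nn)
qed
lemma dm_anti: "de_morgan neg \<Longrightarrow> (x::'a::{distrib_lattice,bounded_lattice}) \<le> y \<Longrightarrow> neg y \<le> neg x"
proof -
  assume d: "de_morgan neg" and "x \<le> y"
  hence "y = sup x y" by (simp add: sup_absorb2)
  hence "neg y = inf (neg x) (neg y)" using dm_sup[OF d, of x y] by simp
  thus ?thesis by (metis inf_le1)
qed
lemma dm_bot: "de_morgan neg \<Longrightarrow> neg (bot::'a::{distrib_lattice,bounded_lattice}) = top"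
proof -
  assume d: "de_morgan neg"
  have "neg top \<le> neg (neg bot)" by (rule dm_anti[OF d]) simp
  hence "neg top \<le> (bot::'a)" by (simp add: dm_nn[OF d])
  hence "neg top = (bot::'a)" by (simp add: bot_unique)
  hence "neg (neg top) = neg (bot::'a)" by simp
  thus ?thesis using d by (simp add: dm_nn)
qed

lemma tri_eq: "de_morgan neg \<Longrightarrow> tri neg star z = inf z (star (neg z))"
  by (simp add: tri_def nabla_def dm_nn)
lemma nabla_neg: "de_morgan neg \<Longrightarrow> nabla neg star (neg z) = neg (tri neg star z)"
  by (simp add: tri_def dm_nn)

lemma tri_comp:
  fixes z :: "'a::{distrib_lattice,bounded_lattice}"
  assumes "mpM_algebra neg star"
  shows "inf (tri neg star z) (neg (tri neg star z)) = bot"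
proof -
  have d: "de_morgan neg" and p: "is_pseudocomplement star"
    and ax: "\<And>x. sup x (neg x) \<le> sup x (star x)" using assms by (auto simp: mpM_algebra_def)
  define w where "w = star (neg z)"
  have pw: "inf (neg z) w = bot" using p unfolding is_pseudocomplement_def w_def by blast
  have "sup (neg z) (neg (neg z)) \<le> sup (neg z) w" using ax[of "neg z"] by (simp add: w_def)
  hence "neg (sup (neg z) w) \<le> neg (sup (neg z) z)" using d dm_anti by (metis dm_nn)
  hence a: "inf z (neg w) \<le> inf z (neg z)" using d by (simp add: dm_sup dm_nn inf_commute)
  have "tri neg star z = inf z w" using d by (simp add: tri_eq w_def)
  hence "inf (tri neg star z) (neg (tri neg star z)) = inf (inf z w) (sup (neg z) (neg w))"
    using d by (simp add: dm_inf)
  also have "\<dots> = sup (inf (inf z w) (neg z)) (inf (inf z w) (neg w))" by (simp add: inf_sup_distrib1)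
  also have "inf (inf z w) (neg z) = bot" using pw by (metis inf.commute inf.left_commute inf_bot_right)
  also have "inf (inf z w) (neg w) \<le> inf w (inf z (neg z))" using a by (simp add: le_infI2 inf.coboundedI2 inf_assoc inf_left_commute)
  also have "inf w (inf z (neg z)) \<le> inf (neg z) w" by (simp add: le_infI2 inf.coboundedI2 inf_commute)
  finally show ?thesis using pw by (simp add: bot_unique)
qed

lemma tri_top:
  fixes z :: "'a::{distrib_lattice,bounded_lattice}"
  assumes "mpM_algebra neg star"
  shows "sup (neg (tri neg star z)) (tri neg star z) = top"
proof -
  have d: "de_morgan neg" using assms by (simp add: mpM_algebra_def)
  have "neg (inf (tri neg star z) (neg (tri neg star z))) = top"
    using tri_comp[OF assms] d dm_bot by metis
  thus ?thesis using d by (simp add: dm_inf dm_nn sup_commute)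
qed

lemma tri_le: "de_morgan neg \<Longrightarrow> tri neg star z \<le> z"
  by (simp add: tri_eq)

lemma cimp_ge:
  assumes "i \<in> {1..k}"
  shows "sup (nabla neg star (neg ((t ^^ i) a))) b \<le> cimp k neg star t a b"
proof -
  have "nabla neg star (neg ((t ^^ i) a)) \<le> Sup_fin ((\<lambda>i. nabla neg star (neg ((t ^^ i) a))) ` {1..k})"
    using assms by (intro Sup_fin.coboundedI) auto
  thus ?thesis unfolding cimp_def by (meson sup_mono order_refl)
qed

lemma filter_Inf:
  assumes "lattice_filter F" "finite I" "I \<noteq> {}" "I \<subseteq> F"
  shows "Inf_fin I \<in> F"
  using assms(2,3,4)
proof (induction I rule: finite_ne_induct)
  case (singleton x) thus ?case by simp
next
  case (insert x I)
  thus ?case using assms(1) unfolding lattice_filter_def by auto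
qed

theorem lemma3p2:
  fixes neg star t :: "'a::{distrib_lattice,bounded_lattice} \<Rightarrow> 'a"
    and k :: nat and F :: "'a set"
  assumes "k \<ge> 1" and "Ck_algebra k neg star t"
  shows "cyclic_ds k neg star t F \<longleftrightarrow> c_filter neg star t F"
proof -
  have m: "mpM_algebra neg star" and tk: "t ^^ k = id" using assms(2) by (auto simp: Ck_algebra_def)
  have d: "de_morgan neg" using m by (simp add: mpM_algebra_def)
  have kin: "k \<in> {1..k}" and oin: "1 \<in> {1..k}" using assms(1) by auto
  have top1: "\<And>x y. x \<le> y \<Longrightarrow> cimp k neg star t x y = top"
  proof -
    fix x y :: 'a assume "x \<le> y"
    have "top = sup (neg (tri neg star x)) (tri neg star x)" using tri_top[OF m] by simp
    also have "\<dots> \<le> sup (nabla neg star (neg ((t ^^ k) x))) y"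
      using tk d \<open>x \<le> y\<close> tri_le[OF d, of star x] by (simp add: nabla_neg sup.coboundedI2 le_supI)
    also have "\<dots> \<le> cimp k neg star t x y" by (rule cimp_ge[OF kin])
    finally show "cimp k neg star t x y = top" by (simp add: top_unique)
  qed
  show ?thesis
  proof
    assume D: "cyclic_ds k neg star t F"
    have tF: "top \<in> F" and mp: "\<And>x y. x \<in> F \<Longrightarrow> cimp k neg star t x y \<in> F \<Longrightarrow> y \<in> F"
      using D unfolding cyclic_ds_def by blast+
    have up: "\<And>x y. x \<in> F \<Longrightarrow> x \<le> y \<Longrightarrow> y \<in> F"
    proof -
      fix x y assume "x \<in> F" "x \<le> y"
      hence "cimp k neg star t x y \<in> F" using top1 tF by simp
      thus "y \<in> F" using mp \<open>x \<in> F\<close> by blast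
    qed
    have meet: "\<And>x y. x \<in> F \<Longrightarrow> y \<in> F \<Longrightarrow> inf x y \<in> F"
    proof -
      fix x y assume x: "x \<in> F" and y: "y \<in> F"
      have "x \<le> sup (neg (tri neg star y)) (inf x y)"
      proof -
        have "sup (neg (tri neg star y)) (inf x y) = inf (sup (neg (tri neg star y)) x) (sup (neg (tri neg star y)) y)"
          by (simp add: sup_inf_distrib1)
        also have "sup (neg (tri neg star y)) y = top"
        proof -
          have "sup (neg (tri neg star y)) (tri neg star y) \<le> sup (neg (tri neg star y)) y"
            using tri_le[OF d, of star y] by (rule sup_mono[OF order_refl])
          thus ?thesis using tri_top[OF m, of y] by (simp add: top_unique)
        qed
        finally show ?thesis by simp
      qed
      also have "\<dots> \<le> cimp k neg star t y (inf x y)"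
        using cimp_ge[OF kin, of neg star t y "inf x y"] tk d by (simp add: nabla_neg)
      finally have "cimp k neg star t y (inf x y) \<in> F" using up x by blast
      thus "inf x y \<in> F" using mp y by blast
    qed
    have "F \<noteq> {}" using tF by blast
    hence "lattice_filter F" unfolding lattice_filter_def using up meet by metis
    moreover have "\<And>x. x \<in> F \<Longrightarrow> tri neg star x \<in> F"
    proof -
      fix x assume x: "x \<in> F"
      have "top = sup (neg (tri neg star x)) (tri neg star x)" using tri_top[OF m] by simp
      also have "\<dots> \<le> cimp k neg star t x (tri neg star x)"
        using cimp_ge[OF kin, of neg star t x "tri neg star x"] tk d by (simp add: nabla_neg)
      finally have "cimp k neg star t x (tri neg star x) \<in> F" using tF by (simp add: top_unique)
      thus "tri neg star x \<in> F" using mp x by blast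
    qed
    moreover have "\<And>x. x \<in> F \<Longrightarrow> t x \<in> F"
    proof -
      fix x assume x: "x \<in> F"
      have "top = sup (neg (tri neg star (t x))) (t x)"
      proof -
        have "sup (neg (tri neg star (t x))) (tri neg star (t x)) \<le> sup (neg (tri neg star (t x))) (t x)"
          using tri_le[OF d, of star "t x"] by (rule sup_mono[OF order_refl])
        thus ?thesis using tri_top[OF m, of "t x"] by (simp add: top_unique)
      qed
      also have "\<dots> \<le> cimp k neg star t x (t x)"
        using cimp_ge[OF oin, of neg star t x "t x"] d by (simp add: nabla_neg)
      finally have "cimp k neg star t x (t x) \<in> F" using tF by (simp add: top_unique)
      thus "t x \<in> F" using mp x by blast
    qed
    ultimately show "c_filter neg star t F" unfolding c_filter_def by simp
  next
    assume C: "c_filter neg star t F"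
    have LF: "lattice_filter F" and trF: "\<And>x. x \<in> F \<Longrightarrow> tri neg star x \<in> F"
      and tF: "\<And>x. x \<in> F \<Longrightarrow> t x \<in> F" using C unfolding c_filter_def by blast+
    have up: "\<And>x y. x \<in> F \<Longrightarrow> x \<le> y \<Longrightarrow> y \<in> F"
      and meet: "\<And>x y. x \<in> F \<Longrightarrow> y \<in> F \<Longrightarrow> inf x y \<in> F" using LF unfolding lattice_filter_def by blast+
    obtain z where "z \<in> F" using LF unfolding lattice_filter_def by blast
    hence topF: "top \<in> F" using up[of z top] by simp
    have tiF: "\<And>i x. x \<in> F \<Longrightarrow> (t ^^ i) x \<in> F"
    proof -
      fix i x show "x \<in> F \<Longrightarrow> (t ^^ i) x \<in> F" by (induction i) (auto intro: tF)
    qed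
    have "\<forall>x y. x \<in> F \<longrightarrow> cimp k neg star t x y \<in> F \<longrightarrow> y \<in> F"
    proof (intro allI impI)
      fix x y assume x: "x \<in> F" and c: "cimp k neg star t x y \<in> F"
      define I where "I = (\<lambda>i. tri neg star ((t ^^ i) x)) ` {1..k}"
      have fI: "finite I" and nI: "I \<noteq> {}" using kin by (auto simp: I_def)
      have "I \<subseteq> F" using x tiF trF by (auto simp: I_def)
      hence aF: "Inf_fin I \<in> F" using filter_Inf[OF LF fI nI] by simp
      define S where "S = Sup_fin ((\<lambda>i. nabla neg star (neg ((t ^^ i) x))) ` {1..k})"
      have "S \<le> star (Inf_fin I)" unfolding S_def
      proof (rule Sup_fin.boundedI)
        show "finite ((\<lambda>i. nabla neg star (neg ((t ^^ i) x))) ` {1..k})" by simp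
        show "(\<lambda>i. nabla neg star (neg ((t ^^ i) x))) ` {1..k} \<noteq> {}" using kin by blast
      next
        fix s assume "s \<in> (\<lambda>i. nabla neg star (neg ((t ^^ i) x))) ` {1..k}"
        then obtain i where i: "i \<in> {1..k}" and s: "s = neg (tri neg star ((t ^^ i) x))"
          using d by (auto simp: nabla_neg)
        have "Inf_fin I \<le> tri neg star ((t ^^ i) x)"
          using i fI by (intro Inf_fin.coboundedI) (auto simp: I_def)
        hence "inf (Inf_fin I) s \<le> inf (tri neg star ((t ^^ i) x)) (neg (tri neg star ((t ^^ i) x)))"
          unfolding s by (rule inf_mono[OF _ order_refl])
        hence "inf (Inf_fin I) s = bot" using tri_comp[OF m] by (simp add: bot_unique)
        thus "s \<le> star (Inf_fin I)" using m unfolding mpM_algebra_def is_pseudocomplement_def by blast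
      qed
      hence "inf (Inf_fin I) S = bot" using m unfolding mpM_algebra_def is_pseudocomplement_def by blast
      hence "inf (Inf_fin I) (cimp k neg star t x y) = inf (Inf_fin I) y"
        unfolding cimp_def S_def[symmetric] by (simp add: inf_sup_distrib1)
      hence "inf (Inf_fin I) (cimp k neg star t x y) \<le> y" by simp
      moreover have "inf (Inf_fin I) (cimp k neg star t x y) \<in> F" using meet aF c by blast
      ultimately show "y \<in> F" using up by blast
    qed
    thus "cyclic_ds k neg star t F" unfolding cyclic_ds_def using topF by blast
  qed
qed

end
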